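(* Let $n$ be odd with $n\mid(q+1)$, let $m$ be a positive even integer, $b$ a positive integer with $\gcd(b,n)=1$, and $\delta$ an odd integer with $3\le\delta\le\frac{n-m+1}{2}$. Put $$A=\{\alpha^{jb}: -\tfrac{m}{2}\le j\le \tfrac{m-2}{2}\}\cup\{\alpha^{\frac{n-1}{2}b}\},\qquad B=\{\alpha^{jb}:-\tfrac{\delta-3}{2}\le j\le\tfrac{\delta-1}{2}\},$$ and let $d_A^{\perp}$ be the minimum distance of the dual of the cyclic code of length $n$ over $\mathbb{F}_{q^2}$ with complete defining set $A$. Then $C_{AB}$ is a cyclic $(d_A^{\perp}-\delta+1,\delta)$-LRC over $\mathbb{F}_q$ with dimension $n-m-2\delta+3$. If moreover $\delta-2<n-m-d_A^{\perp}$, then $C_{AB}$ is optimal and has minimum distance $m+\delta-1$.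
   Context: Let $q$ be a prime power and $n\mid(q+1)$, so the set $R_n$ of all $n$-th roots of unity lies in $\mathbb{F}_{q^2}$; let $\alpha\in\mathbb{F}_{q^2}$ be a primitive $n$-th root of unity. For $A,B\subseteq R_n$, $AB=\{\beta\gamma:\beta\in A,\gamma\in B\}$. For $Z\subseteq R_n$, the cyclic code of length $n$ over $\mathbb{F}_{q^2}$ with complete defining set $Z$ is the ideal generated by $\prod_{\beta\in Z}(x-\beta)$ in $\mathbb{F}_{q^2}[x]/(x^n-1)$; if $\{j:\alpha^j\in Z\}$ is closed under $j\mapsto-j\bmod n$ (a union of $q$-cyclotomic cosets), $C_Z$ denotes the cyclic code of length $n$ over $\mathbb{F}_q$ generated by this polynomial, which lies in $\mathbb{F}_q[x]$. Locality: for a linear code $C\subseteq\mathbb{F}_q^n$ and integers $r\ge1$, $\delta\ge2$, the $i$-th coordinate has $(r,\delta)$-locality if there is $S_i\subseteq\{1,\dots,n\}$ with $i\in S_i$, $|S_i|\le r+\delta-1$ such that the punctured code $C|_{S_i}$ has minimum distance at least $\delta$; $C$ is an $(r,\delta)$-LRC if every coordinate has $(r,\delta)$-locality. An $[n,k,d]$ $(r,\delta)$-LRC is optimal if $d=n-k-(\lceil k/r\rceil-1)(\delta-1)+1$ (always an upper bound on $d$). *)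

theory Defs
  imports "HOL-Computational_Algebra.Polynomial" "HOL-Computational_Algebra.Primes" Complex_Main
begin

(* Words of length n are polynomials c with coeff c i = 0 for i >= n;
   coordinate i of the word is coeff c i (i = 0..n-1). *)
definition word_len :: "nat \<Rightarrow> 'a::zero poly \<Rightarrow> bool" where
  "word_len n c \<longleftrightarrow> (\<forall>i\<ge>n. coeff c i = 0)"

definition hweight :: "nat \<Rightarrow> 'a::zero poly \<Rightarrow> nat" where
  "hweight n c = card {i. i < n \<and> coeff c i \<noteq> 0}"

definition min_dist :: "nat \<Rightarrow> 'a::zero poly set \<Rightarrow> nat" where
  "min_dist n C = Min {hweight n c | c. c \<in> C \<and> c \<noteq> 0}"

(* the subfield F_q of a field of order q^2 *)
definition Fq :: "nat \<Rightarrow> 'a::field set" where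
  "Fq q = {x. x ^ q = x}"

definition gen_poly :: "'a::field set \<Rightarrow> 'a poly" where
  "gen_poly Z = (\<Prod>\<beta>\<in>Z. [:-\<beta>, 1:])"

definition cyclic_code :: "nat \<Rightarrow> 'a::field set \<Rightarrow> 'a poly set" where
  "cyclic_code n Z = {(f * gen_poly Z) mod (monom 1 n - 1) | f. True}"

definition cyclic_code_Fq :: "nat \<Rightarrow> nat \<Rightarrow> 'a::field set \<Rightarrow> 'a poly set" where
  "cyclic_code_Fq q n Z =
     {(f * gen_poly Z) mod (monom 1 n - 1) | f. \<forall>i. coeff f i \<in> Fq q}"

definition dual_code :: "nat \<Rightarrow> 'a::field poly set \<Rightarrow> 'a poly set" where
  "dual_code n C = {v. word_len n v \<and> (\<forall>c\<in>C. (\<Sum>i<n. coeff c i * coeff v i) = 0)}"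

definition code_dim :: "nat \<Rightarrow> 'a poly set \<Rightarrow> nat" where
  "code_dim q C = (THE k. card C = q ^ k)"

definition punct_min_dist_ge :: "nat set \<Rightarrow> 'a::zero poly set \<Rightarrow> nat \<Rightarrow> bool" where
  "punct_min_dist_ge S C \<delta> \<longleftrightarrow>
     (\<forall>c\<in>C. (\<exists>i\<in>S. coeff c i \<noteq> 0) \<longrightarrow> card {i\<in>S. coeff c i \<noteq> 0} \<ge> \<delta>)"

definition has_locality :: "nat \<Rightarrow> 'a::zero poly set \<Rightarrow> int \<Rightarrow> nat \<Rightarrow> nat \<Rightarrow> bool" where
  "has_locality n C r \<delta> i \<longleftrightarrow>
     (\<exists>S. S \<subseteq> {..<n} \<and> i \<in> S \<and> int (card S) \<le> r + int \<delta> - 1 \<and> punct_min_dist_ge S C \<delta>)"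

definition is_LRC :: "nat \<Rightarrow> 'a::zero poly set \<Rightarrow> int \<Rightarrow> nat \<Rightarrow> bool" where
  "is_LRC n C r \<delta> \<longleftrightarrow> r \<ge> 1 \<and> \<delta> \<ge> 2 \<and> (\<forall>i<n. has_locality n C r \<delta> i)"

(* Singleton-like bound attained *)
definition optimal_LRC :: "int \<Rightarrow> int \<Rightarrow> int \<Rightarrow> int \<Rightarrow> int \<Rightarrow> bool" where
  "optimal_LRC n k d r \<delta> \<longleftrightarrow> d = n - k - (\<lceil>real_of_int k / real_of_int r\<rceil> - 1) * (\<delta> - 1) + 1"

definition set_prod :: "'a::times set \<Rightarrow> 'a set \<Rightarrow> 'a set" where
  "set_prod A B = {x * y | x y. x \<in> A \<and> y \<in> B}"

end

theory Submission imports Defs "HOL-Number_Theory.Residues" begin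
hide_const (open) UnivPoly.up_ring.coeff UnivPoly.up_ring.monom

lemma char_eq_p:
  assumes "prime p" "k > 0" "card (UNIV :: 'a::{field,finite} set) = (p ^ k) ^ 2"
  shows "CHAR('a) = p"
proof -
  have "CHAR('a) > 0" by (rule finite_imp_CHAR_pos) simp
  hence pr: "prime CHAR('a)" using prime_CHAR_semidom by blast
  have "CHAR('a) dvd p ^ (k*2)" using CHAR_dvd_CARD[where 'a='a] assms(3) by (simp add: power_mult)
  hence "CHAR('a) dvd p" using pr prime_dvd_power by blast
  thus ?thesis using pr assms(1) by (simp add: primes_dvd_imp_eq)
qed

lemma frob_add:
  assumes "prime p" "CHAR('a) = p" "q = p ^ k"
  shows "((x::'a::field) + y) ^ q = x ^ q + y ^ q"
  using freshmans_dream'[of q k x y] assms by simp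

lemma frob_sum:
  assumes "prime p" "CHAR('a) = p" "q = p ^ k"
  shows "(sum (f::'b \<Rightarrow> 'a::field) A) ^ q = (\<Sum>i\<in>A. f i ^ q)"
  using freshmans_dream_sum'[of q k f A] assms by simp

lemma frob_uminus:
  assumes "prime p" "CHAR('a) = p" "q = p ^ k"
  shows "(- (x::'a::field)) ^ q = - (x ^ q)"
proof -
  have "(x + - x) ^ q = x ^ q + (- x) ^ q" using frob_add[OF assms] .
  moreover have "q > 0" using assms prime_gt_0_nat by auto
  moreover have "(0::'a) ^ q = 0" using \<open>q > 0\<close> by simp
  ultimately have "0 = x ^ q + (- x) ^ q" by simp
  thus ?thesis by (simp add: eq_neg_iff_add_eq_0 add.commute)
qed

lemma field_power_card_same:
  fixes x :: "'a :: {field,finite}"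
  shows   "x ^ card (UNIV :: 'a set) = x"
proof (cases "x = 0")
  case False
  have "x * (\<Prod>y\<in>UNIV-{0}. x * y) = x * x ^ (card (UNIV :: 'a set) - 1) * \<Prod>(UNIV-{0})"
    by (simp add: prod.distrib mult_ac)
  also have "x * x ^ (card (UNIV :: 'a set) - 1) = x ^ Suc (card (UNIV :: 'a set) - 1)"
    by (subst power_Suc) auto
  also have "Suc (card (UNIV :: 'a set) - 1) = card (UNIV :: 'a set)"
    using finite_UNIV_card_ge_0[where ?'a = 'a] by simp
  also have "(\<Prod>y\<in>UNIV-{0}. x * y) = (\<Prod>y\<in>UNIV-{0}. y)"
    by (rule prod.reindex_bij_witness[of _ "\<lambda>y. y / x" "\<lambda>y. x * y"]) (use False in auto)
  finally show ?thesis
    by simp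
qed (use finite_UNIV_card_ge_0[where ?'a = 'a] in auto)

lemma card_Fq:
  assumes "prime p" "k > 0" "q = p ^ k" "card (UNIV :: 'a::{field,finite} set) = q ^ 2"
  shows "card (Fq q :: 'a set) = q"
proof -
  have ch: "CHAR('a) = p" using char_eq_p assms by blast
  have p2: "p \<ge> 2" using assms(1) prime_ge_2_nat by blast
  have "p \<le> p ^ k" using assms(2) p2 by (simp add: self_le_power)
  hence q2: "q \<ge> 2" using p2 assms(3) by linarith
  define P :: "'a poly" where "P = Polynomial.monom 1 q + [:0,-1:]"
  have degP: "degree P = q" using q2 unfolding P_def
    by (subst degree_add_eq_left) (auto simp: degree_monom_eq)
  have P0: "P \<noteq> 0" using degP q2 by auto
  have polyP: "poly P x = x ^ q - x" for x by (simp add: P_def poly_monom)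
  have Fqroots: "Fq q = {x. poly P x = 0}" by (auto simp: Fq_def polyP)
  have le: "card (Fq q :: 'a set) \<le> q" using card_poly_roots_bound[OF P0] degP Fqroots by simp
  define R :: "'a poly" where "R = P ^ (q - 1) + 1"
  have degP1: "degree (P ^ (q-1)) = q * (q - 1)" using degP by (simp add: degree_power_eq P0)
  have degR: "degree R = q * (q - 1)" using q2 degP1 unfolding R_def
    by (subst degree_add_eq_left) (auto simp: degP1)
  have "degree R > 0" using degR q2 by simp
  hence R0: "R \<noteq> 0" by auto
  have allroot: "poly P x = 0 \<or> poly R x = 0" for x
  proof -
    define y where "y = x ^ q - x"
    have "(y + x) ^ q = y ^ q + x ^ q" using frob_add[OF assms(1) ch assms(3)] .
    moreover have "y + x = x ^ q" by (simp add: y_def)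
    moreover have "(x ^ q) ^ q = x" using field_power_card_same[of x] assms(4)
      by (simp add: power_mult[symmetric] power2_eq_square)
    ultimately have "y ^ q + y = 0" by (simp add: y_def algebra_simps)
    moreover have "y ^ q = y * y ^ (q - 1)" using q2 by (cases q) auto
    ultimately have "y * (y ^ (q - 1) + 1) = 0" by (simp add: distrib_left)
    thus ?thesis by (simp add: y_def polyP R_def)
  qed
  have "UNIV \<subseteq> {x. poly P x = 0} \<union> {x. poly R x = 0}" using allroot by auto
  hence "card (UNIV :: 'a set) \<le> card ({x. poly P x = 0} \<union> {x. poly R x = 0})"
    by (intro card_mono) auto
  also have "\<dots> \<le> card {x. poly P x = 0} + card {x. poly R x = 0}" by (rule card_Un_le)
  also have "\<dots> \<le> card (Fq q :: 'a set) + q * (q - 1)"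
    using card_poly_roots_bound[OF R0] degR Fqroots by simp
  finally have "q ^ 2 \<le> card (Fq q :: 'a set) + q * (q - 1)" using assms(4) by simp
  moreover have "q ^ 2 = q + q * (q - 1)" using q2 by (cases q) (auto simp: power2_eq_square)
  ultimately have "q \<le> card (Fq q :: 'a set)" by linarith
  with le show ?thesis by simp
qed



definition frob_ok :: "nat \<Rightarrow> 'a::field itself \<Rightarrow> bool" where
  "frob_ok q T \<longleftrightarrow> q > 0 \<and> (\<forall>x y::'a. (x + y) ^ q = x ^ q + y ^ q)"

lemma frob_okD:
  assumes "frob_ok q TYPE('a::field)"
  shows "q > 0" "((x::'a) + y) ^ q = x ^ q + y ^ q"
  using assms unfolding frob_ok_def by auto

lemma frob_ok_intro:
  assumes "prime p" "CHAR('a::field) = p" "q = p ^ k"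
  shows "frob_ok q TYPE('a)"
  unfolding frob_ok_def using frob_add[OF assms] assms prime_gt_0_nat by auto

lemma frob_zero: "frob_ok q TYPE('a::field) \<Longrightarrow> (0::'a) ^ q = 0"
  using frob_okD(1) by (simp add: power_0_left)

lemma frob_uminus':
  assumes "frob_ok q TYPE('a::field)"
  shows "(- (x::'a)) ^ q = - (x ^ q)"
proof -
  have "(x + - x) ^ q = x ^ q + (- x) ^ q" using frob_okD(2)[OF assms] .
  hence "0 = x ^ q + (- x) ^ q" using frob_zero[OF assms] by simp
  thus ?thesis by (simp add: eq_neg_iff_add_eq_0 add.commute)
qed

lemma frob_diff:
  assumes "frob_ok q TYPE('a::field)"
  shows "((x::'a) - y) ^ q = x ^ q - y ^ q"
  using frob_okD(2)[OF assms, of x "-y"] frob_uminus'[OF assms, of y] by simp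

lemma frob_sum':
  assumes "frob_ok q TYPE('a::field)"
  shows "(sum (f::'b \<Rightarrow> 'a) A) ^ q = (\<Sum>i\<in>A. f i ^ q)"
  by (induction A rule: infinite_finite_induct)
     (auto simp: frob_zero[OF assms] frob_okD(2)[OF assms])

lemma Fq_add: "frob_ok q TYPE('a::field) \<Longrightarrow> x \<in> Fq q \<Longrightarrow> y \<in> Fq q \<Longrightarrow> (x::'a) + y \<in> Fq q"
  by (simp add: Fq_def frob_okD)
lemma Fq_diff: "frob_ok q TYPE('a::field) \<Longrightarrow> x \<in> Fq q \<Longrightarrow> y \<in> Fq q \<Longrightarrow> (x::'a) - y \<in> Fq q"
  by (simp add: Fq_def frob_diff)
lemma Fq_mult: "x \<in> Fq q \<Longrightarrow> y \<in> Fq q \<Longrightarrow> (x::'a::field) * y \<in> Fq q"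
  by (simp add: Fq_def power_mult_distrib)
lemma Fq_zero: "frob_ok q TYPE('a::field) \<Longrightarrow> (0::'a) \<in> Fq q"
  by (simp add: Fq_def frob_zero)
lemma Fq_one: "(1::'a::field) \<in> Fq q"
  by (simp add: Fq_def)

definition frobp :: "nat \<Rightarrow> 'a::field poly \<Rightarrow> 'a poly" where
  "frobp q p = map_poly (\<lambda>c. c ^ q) p"

lemma coeff_frobp:
  assumes "frob_ok q TYPE('a::field)"
  shows "coeff (frobp q (p::'a poly)) i = coeff p i ^ q"
  unfolding frobp_def by (rule coeff_map_poly) (simp add: frob_zero[OF assms])

lemma frobp_add:
  assumes "frob_ok q TYPE('a::field)"
  shows "frobp q ((p::'a poly) + r) = frobp q p + frobp q r"
  by (rule poly_eqI) (simp add: coeff_frobp[OF assms] frob_okD(2)[OF assms])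

lemma frobp_diff:
  assumes "frob_ok q TYPE('a::field)"
  shows "frobp q ((p::'a poly) - r) = frobp q p - frobp q r"
  by (rule poly_eqI) (simp add: coeff_frobp[OF assms] frob_diff[OF assms])

lemma frobp_mult:
  assumes "frob_ok q TYPE('a::field)"
  shows "frobp q ((p::'a poly) * r) = frobp q p * frobp q r"
  by (rule poly_eqI) (simp add: coeff_frobp[OF assms] coeff_mult frob_sum'[OF assms] power_mult_distrib)

lemma frobp_one:
  assumes "frob_ok q TYPE('a::field)"
  shows "frobp q (1::'a poly) = 1"
  by (rule poly_eqI) (simp add: coeff_frobp[OF assms] coeff_1 frob_zero[OF assms])

lemma frobp_prod:
  assumes "frob_ok q TYPE('a::field)"
  shows "frobp q (\<Prod>i\<in>A. (f i :: 'a poly)) = (\<Prod>i\<in>A. frobp q (f i))"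
  by (induction A rule: infinite_finite_induct) (auto simp: frobp_one[OF assms] frobp_mult[OF assms])

lemma frobp_fixed_iff:
  assumes "frob_ok q TYPE('a::field)"
  shows "frobp q (p::'a poly) = p \<longleftrightarrow> (\<forall>i. coeff p i \<in> Fq q)"
  by (auto simp: poly_eq_iff coeff_frobp[OF assms] Fq_def)

lemma frobp_mod:
  assumes ok: "frob_ok q TYPE('a::field)" and fp: "frobp q (p::'a poly) = p" and fd: "frobp q d = d"
  shows "frobp q (p mod d) = p mod d"
proof (cases "d = 0")
  case True thus ?thesis using fp by simp
next
  case False
  have "p = d * (p div d) + p mod d" by simp
  hence "frobp q p = frobp q d * frobp q (p div d) + frobp q (p mod d)"
    by (metis frobp_add[OF ok] frobp_mult[OF ok])
  hence eq: "p = d * frobp q (p div d) + frobp q (p mod d)" using fp fd by simp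
  have deg: "degree (frobp q (p mod d)) = degree (p mod d)"
    unfolding frobp_def by (rule degree_map_poly) (simp add: frob_okD(1)[OF ok])
  have "p mod d = frobp q (p mod d) mod d"
    by (subst eq) (simp add: mod_mult_self2 add.commute)
  also have "\<dots> = frobp q (p mod d)"
  proof (cases "p mod d = 0")
    case True
    hence "frobp q (p mod d) = 0" unfolding frobp_def by simp
    thus ?thesis by simp
  next
    case False
    hence "degree (p mod d) < degree d" using \<open>d \<noteq> 0\<close> degree_mod_less' by blast
    thus ?thesis using deg by (simp add: mod_poly_less)
  qed
  finally show ?thesis by simp
qed

lemma card_polys_bounded:
  assumes "finite K" "0 \<in> K" "N > 0"
  shows "card {h::'a::zero poly. degree h < N \<and> (\<forall>i. coeff h i \<in> K)} = card K ^ N"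
proof -
  let ?H = "{h::'a poly. degree h < N \<and> (\<forall>i. coeff h i \<in> K)}"
  let ?L = "{xs. set xs \<subseteq> K \<and> length xs = N}"
  have "bij_betw (\<lambda>h. map (coeff h) [0..<N]) ?H ?L"
  proof (rule bij_betw_byWitness[where f'=Poly])
    show "\<forall>h\<in>?H. Poly (map (coeff h) [0..<N]) = h"
    proof
      fix h assume h: "h \<in> ?H"
      show "Poly (map (coeff h) [0..<N]) = h"
        using h by (auto simp: poly_eq_iff nth_default_def coeff_eq_0)
    qed
    show "\<forall>xs\<in>?L. map (coeff (Poly xs)) [0..<N] = xs"
      by (auto simp: nth_default_def intro!: nth_equalityI)
    show "(\<lambda>h. map (coeff h) [0..<N]) ` ?H \<subseteq> ?L" by auto
    show "Poly ` ?L \<subseteq> ?H"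
    proof
      fix h assume "h \<in> Poly ` ?L"
      then obtain xs where xs: "set xs \<subseteq> K" "length xs = N" "h = Poly xs" by auto
      have "degree h < N"
      proof (cases "h = 0")
        case True thus ?thesis using assms by simp
      next
        case False
        have "coeff h (degree h) \<noteq> 0" using False by simp
        hence "degree h < length xs" using xs(3) by (auto simp: nth_default_def split: if_splits)
        thus ?thesis using xs by simp
      qed
      moreover have "coeff h i \<in> K" for i using xs assms(2) by (auto simp: nth_default_def)
      ultimately show "h \<in> ?H" by auto
    qed
  qed
  hence "card ?H = card ?L" by (rule bij_betw_same_card)
  thus ?thesis using card_lists_length_eq[OF assms(1)] by simp
qed



lemma word_len_iff: "n > 0 \<Longrightarrow> word_len n u \<longleftrightarrow> degree u < n"
  unfolding word_len_def
  by (metis coeff_eq_0 le_degree leading_coeff_0_iff less_le_trans not_le degree_0)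

lemma poly_gen_poly: "poly (gen_poly Z) x = (\<Prod>w\<in>Z. x - w)"
  by (simp add: gen_poly_def poly_prod)

lemma gen_poly_nz: "gen_poly (Z::'a::field set) \<noteq> 0"
  unfolding gen_poly_def by (cases "finite Z") (simp_all add: prod_zero_iff)

lemma degree_gen_poly: "finite Z \<Longrightarrow> degree (gen_poly (Z::'a::field set)) = card Z"
  unfolding gen_poly_def by (subst degree_prod_eq_sum_degree) auto

lemma gen_poly_dvd:
  assumes "finite Z" "\<forall>z\<in>Z. poly u z = (0::'a::field)"
  shows "gen_poly Z dvd u"
  using assms
proof (induction Z rule: finite_induct)
  case empty thus ?case by (simp add: gen_poly_def)
next
  case (insert z Z)
  then obtain h where h: "u = gen_poly Z * h" by auto
  have "poly (gen_poly Z) z \<noteq> 0" using insert(2) by (auto simp: poly_gen_poly prod_zero_iff insert(1))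
  moreover have "poly u z = 0" using insert by auto
  ultimately have "poly h z = 0" using h by simp
  then obtain h' where "h = [:-z,1:] * h'" using poly_eq_0_iff_dvd by (metis dvdE)
  moreover have "gen_poly (insert z Z) = [:-z,1:] * gen_poly Z" by (simp add: gen_poly_def insert(1,2))
  ultimately have "u = gen_poly (insert z Z) * h'" using h by (simp only: mult_ac)
  thus ?case by simp
qed

definition Xn :: "nat \<Rightarrow> 'a::field poly" where "Xn n = Polynomial.monom 1 n - 1"

lemma degree_Xn: "n > 0 \<Longrightarrow> degree (Xn n :: 'a::field poly) = n"
proof -
  assume "n > 0"
  have "Xn n = Polynomial.monom (1::'a) n + (- 1)" by (simp add: Xn_def)
  also have "degree \<dots> = n" using \<open>n > 0\<close> by (subst degree_add_eq_left) (auto simp: degree_monom_eq)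
  finally show ?thesis .
qed

lemma poly_Xn: "poly (Xn n) x = x ^ n - (1::'a::field)"
  by (simp add: Xn_def poly_monom)

lemma Xn_nz: "n > 0 \<Longrightarrow> Xn n \<noteq> (0::'a::field poly)"
proof
  assume "n > 0" "Xn n = (0::'a poly)"
  moreover have "degree (Xn n :: 'a poly) = n" by (rule degree_Xn) fact
  ultimately show False by simp
qed

lemma poly_mod_root: "poly d x = 0 \<Longrightarrow> poly (p mod d) x = poly p (x::'a::field)"
proof -
  assume "poly d x = 0"
  have "p = d * (p div d) + p mod d" by simp
  hence "poly p x = poly d x * poly (p div d) x + poly (p mod d) x" by (metis poly_add poly_mult)
  thus ?thesis using \<open>poly d x = 0\<close> by simp
qed

lemma degree_mod_Xn: "n > 0 \<Longrightarrow> degree (p mod Xn n :: 'a::field poly) < n"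
proof -
  assume n: "n > 0"
  have d: "degree (Xn n :: 'a poly) = n" using degree_Xn[OF n] .
  show ?thesis
  proof (cases "p mod Xn n = 0")
    case True thus ?thesis using n by simp
  next
    case False thus ?thesis using degree_mod_less'[OF Xn_nz[OF n] False] d by simp
  qed
qed

lemma code_char:
  assumes "finite Z" "n > 0" "\<forall>z\<in>Z. z ^ n = (1::'a::field)"
  shows "cyclic_code n Z = {u. degree u < n \<and> (\<forall>z\<in>Z. poly u z = 0)}"
proof safe
  fix u assume "u \<in> cyclic_code n Z"
  then obtain f where f: "u = (f * gen_poly Z) mod Xn n" unfolding cyclic_code_def Xn_def by auto
  show "degree u < n" using f degree_mod_Xn assms(2) by simp
  fix z assume "z \<in> Z"
  hence "poly (Xn n) z = 0" using assms(3) by (simp add: poly_Xn)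
  hence "poly u z = poly (f * gen_poly Z) z" using f poly_mod_root[of "Xn n" z] by simp
  thus "poly u z = 0" using \<open>z \<in> Z\<close> by (auto simp: poly_gen_poly prod_zero_iff assms(1))
next
  fix u :: "'a poly" assume u: "degree u < n" "\<forall>z\<in>Z. poly u z = 0"
  obtain h where h: "u = gen_poly Z * h" using gen_poly_dvd[OF assms(1) u(2)] by auto
  have "u = (h * gen_poly Z) mod Xn n"
  proof -
    have "degree (h * gen_poly Z) < degree (Xn n :: 'a poly)" using u(1) degree_Xn[OF assms(2), where 'a='a] h by (simp add: mult.commute)
    hence "(h * gen_poly Z) mod Xn n = h * gen_poly Z" by (rule mod_poly_less)
    thus ?thesis using h by (simp add: mult.commute)
  qed
  thus "u \<in> cyclic_code n Z" unfolding cyclic_code_def Xn_def by auto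
qed

lemma frobp_Xn:
  assumes "frob_ok q TYPE('a::field)"
  shows "frobp q (Xn n :: 'a poly) = Xn n"
  using assms by (simp add: frobp_fixed_iff Xn_def coeff_monom Fq_one Fq_zero Fq_diff coeff_1)

lemma codeFq_char:
  assumes ok: "frob_ok q TYPE('a::field)" and fg: "frobp q (gen_poly Z) = gen_poly Z"
    and "finite Z" "n > 0" "\<forall>z\<in>Z. z ^ n = (1::'a)"
  shows "cyclic_code_Fq q n Z = {u. degree u < n \<and> frobp q u = u \<and> (\<forall>z\<in>Z. poly u z = 0)}"
proof safe
  fix u assume "u \<in> cyclic_code_Fq q n Z"
  then obtain f where f: "u = (f * gen_poly Z) mod Xn n" "\<forall>i. coeff f i \<in> Fq q"
    unfolding cyclic_code_Fq_def Xn_def by auto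
  have "u \<in> cyclic_code n Z" using f(1) unfolding cyclic_code_def Xn_def by auto
  thus "degree u < n" "\<And>z. z \<in> Z \<Longrightarrow> poly u z = 0" using code_char[OF assms(3-5)] by auto
  have "frobp q f = f" using f(2) frobp_fixed_iff[OF ok] by blast
  hence "frobp q (f * gen_poly Z) = f * gen_poly Z" using fg frobp_mult[OF ok] by simp
  thus "frobp q u = u" using f(1) frobp_mod[OF ok _ frobp_Xn[OF ok]] by simp
next
  fix u :: "'a poly" assume u: "degree u < n" "frobp q u = u" "\<forall>z\<in>Z. poly u z = 0"
  obtain h where h: "u = gen_poly Z * h" using gen_poly_dvd[OF assms(3) u(3)] by auto
  have "gen_poly Z * frobp q h = gen_poly Z * h" using u(2) h frobp_mult[OF ok] fg by simp
  hence "frobp q h = h" using gen_poly_nz by (metis mult_left_cancel)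
  hence "\<forall>i. coeff h i \<in> Fq q" using frobp_fixed_iff[OF ok] by blast
  moreover have "u = (h * gen_poly Z) mod Xn n"
  proof -
    have "degree (h * gen_poly Z) < degree (Xn n :: 'a poly)" using u(1) degree_Xn[OF assms(4), where 'a='a] h by (simp add: mult.commute)
    hence "(h * gen_poly Z) mod Xn n = h * gen_poly Z" by (rule mod_poly_less)
    thus ?thesis using h by (simp add: mult.commute)
  qed
  ultimately show "u \<in> cyclic_code_Fq q n Z" unfolding cyclic_code_Fq_def Xn_def by auto
qed

lemma codeFq_card:
  assumes ok: "frob_ok q TYPE('a::field)" and fg: "frobp q (gen_poly Z) = gen_poly Z"
    and "finite Z" "n > 0" "\<forall>z\<in>Z. z ^ n = (1::'a)" "card Z < n"
    and cq: "card (Fq q :: 'a set) = q"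
  shows "card (cyclic_code_Fq q n Z) = q ^ (n - card Z)"
proof -
  let ?H = "{h::'a poly. degree h < n - card Z \<and> (\<forall>i. coeff h i \<in> Fq q)}"
  have "card (Fq q :: 'a set) > 0" using cq frob_okD(1)[OF ok] by simp
  hence fin: "finite (Fq q :: 'a set)" by (rule card_ge_0_finite)
  have cH: "card ?H = q ^ (n - card Z)"
    using card_polys_bounded[OF fin Fq_zero[OF ok]] assms(6) cq by simp
  have eq: "cyclic_code_Fq q n Z = (\<lambda>h. gen_poly Z * h) ` ?H"
  proof -
    have "u \<in> cyclic_code_Fq q n Z \<longleftrightarrow> u \<in> (\<lambda>h. gen_poly Z * h) ` ?H" for u
    proof
      assume "u \<in> cyclic_code_Fq q n Z"
      hence u: "degree u < n" "frobp q u = u" "\<forall>z\<in>Z. poly u z = 0" using codeFq_char[OF assms(1-5)] by auto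
      obtain h where h: "u = gen_poly Z * h" using gen_poly_dvd[OF assms(3) u(3)] by auto
      have "gen_poly Z * frobp q h = gen_poly Z * h" using u(2) h frobp_mult[OF ok] fg by simp
      hence "frobp q h = h" using gen_poly_nz by (metis mult_left_cancel)
      hence "\<forall>i. coeff h i \<in> Fq q" using frobp_fixed_iff[OF ok] by blast
      moreover have "degree h < n - card Z"
      proof (cases "h = 0")
        case True thus ?thesis using assms(6) by simp
      next
        case False
        have "degree (gen_poly Z * h) = degree (gen_poly Z) + degree h" by (rule degree_mult_eq[OF gen_poly_nz False])
        hence "degree u = card Z + degree h" using h(1) degree_gen_poly[OF assms(3)] by simp
        thus ?thesis using u(1) by simp
      qed
      ultimately show "u \<in> (\<lambda>h. gen_poly Z * h) ` ?H" using h by auto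
    next
      assume "u \<in> (\<lambda>h. gen_poly Z * h) ` ?H"
      then obtain h where h: "u = gen_poly Z * h" "degree h < n - card Z" "\<forall>i. coeff h i \<in> Fq q" by auto
      have "degree u < n"
      proof (cases "h = 0")
        case True thus ?thesis using h assms(4) by simp
      next
        case False
        have "degree (gen_poly Z * h) = degree (gen_poly Z) + degree h" by (rule degree_mult_eq[OF gen_poly_nz False])
        hence "degree u = card Z + degree h" using h(1) degree_gen_poly[OF assms(3)] by simp
        thus ?thesis using h(2) by simp
      qed
      moreover have "frobp q u = u"
      proof -
        have "frobp q h = h" using h(3) frobp_fixed_iff[OF ok] by blast
        thus ?thesis using h(1) frobp_mult[OF ok] fg by simp
      qed
      moreover have "\<forall>z\<in>Z. poly u z = 0" using h(1) by (auto simp: poly_gen_poly prod_zero_iff assms(3))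
      ultimately show "u \<in> cyclic_code_Fq q n Z" using codeFq_char[OF assms(1-5)] by auto
    qed
    thus ?thesis by blast
  qed
  have inj: "inj_on (\<lambda>h. gen_poly Z * h) ?H" by (rule inj_onI) (simp add: gen_poly_nz)
  have "card (cyclic_code_Fq q n Z) = card ?H" unfolding eq by (rule card_image[OF inj])
  thus ?thesis using cH by (rule trans)
qed



lemma poly_sum_n:
  fixes u :: "'a::field poly"
  assumes "degree u < n"
  shows "poly u x = (\<Sum>i<n. coeff u i * x ^ i)"
proof -
  have "poly u x = (\<Sum>i\<le>degree u. coeff u i * x ^ i)" by (rule poly_altdef)
  also have "\<dots> = (\<Sum>i<n. coeff u i * x ^ i)"
    by (rule sum.mono_neutral_left) (use assms in \<open>auto simp: coeff_eq_0\<close>)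
  finally show ?thesis .
qed

lemma vandermonde_zero:
  fixes y u :: "'b \<Rightarrow> 'a::field"
  assumes fin: "finite I" and inj: "inj_on y I"
    and eqs: "\<forall>j<card I. (\<Sum>i\<in>I. u i * y i ^ j) = 0"
  shows "\<forall>i\<in>I. u i = 0"
proof
  fix i0 assume i0: "i0 \<in> I"
  define P where "P = (\<Prod>k\<in>I-{i0}. [:- y k, 1:])"
  have "degree P \<le> (\<Sum>k\<in>I-{i0}. degree [:- y k, 1:])"
    unfolding P_def using degree_prod_sum_le[of "I-{i0}" "\<lambda>k. [:- y k, 1:]"] fin by (simp add: o_def)
  also have "\<dots> = card (I - {i0})" by simp
  also have "\<dots> = card I - 1" using i0 fin by simp
  finally have "degree P \<le> card I - 1" .
  moreover have "card I > 0" using i0 fin card_gt_0_iff by blast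
  ultimately have degP: "degree P < card I" by linarith
  have polyP: "poly P x = (\<Prod>k\<in>I-{i0}. x - y k)" for x by (simp add: P_def poly_prod)
  have "(\<Sum>i\<in>I. u i * poly P (y i)) = (\<Sum>i\<in>I. u i * (\<Sum>j\<le>degree P. coeff P j * y i ^ j))"
    by (simp add: poly_altdef)
  also have "\<dots> = (\<Sum>j\<le>degree P. coeff P j * (\<Sum>i\<in>I. u i * y i ^ j))"
    by (simp add: sum_distrib_left sum_distrib_right mult_ac sum.swap[of _ I])
  also have "\<dots> = 0" using eqs degP by (intro sum.neutral) auto
  finally have s0: "(\<Sum>i\<in>I. u i * poly P (y i)) = 0" .
  have "(\<Sum>i\<in>I. u i * poly P (y i)) = u i0 * poly P (y i0) + (\<Sum>i\<in>I-{i0}. u i * poly P (y i))"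
    by (rule sum.remove[OF fin i0])
  moreover have "(\<Sum>i\<in>I-{i0}. u i * poly P (y i)) = 0"
  proof (rule sum.neutral, rule ballI)
    fix i assume "i \<in> I - {i0}"
    hence "poly P (y i) = 0" using fin by (auto simp: polyP prod_zero_iff)
    thus "u i * poly P (y i) = 0" by simp
  qed
  ultimately have "(\<Sum>i\<in>I. u i * poly P (y i)) = u i0 * poly P (y i0)" by simp
  moreover have "poly P (y i0) \<noteq> 0"
    using inj i0 fin by (auto simp: polyP prod_zero_iff inj_on_def)
  ultimately show "u i0 = 0" using s0 by simp
qed

lemma pow_inj:
  fixes \<beta> :: "'a::field"
  assumes "\<beta> ^ n = 1" "\<forall>k. 0 < k \<and> k < n \<longrightarrow> \<beta> ^ k \<noteq> 1" "n > 0"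
  shows "inj_on (\<lambda>i. \<beta> ^ i) {..<n}"
proof (rule inj_onI)
  have b0: "\<beta> \<noteq> 0" using assms(1,3) by (metis power_0_left zero_neq_one not_gr0)
  fix i j assume ij: "i \<in> {..<n}" "j \<in> {..<n}" "\<beta> ^ i = \<beta> ^ j"
  show "i = j"
  proof (rule ccontr)
    assume "i \<noteq> j"
    then consider "i < j" | "j < i" by linarith
    thus False
    proof cases
      case 1
      have "\<beta> ^ j = \<beta> ^ i * \<beta> ^ (j - i)" using 1 by (simp add: power_add[symmetric])
      hence "\<beta> ^ (j - i) = 1" using ij(3) b0 by simp
      thus False using assms(2) 1 ij by auto
    next
      case 2
      have "\<beta> ^ i = \<beta> ^ j * \<beta> ^ (i - j)" using 2 by (simp add: power_add[symmetric])
      hence "\<beta> ^ (i - j) = 1" using ij(3) b0 by simp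
      thus False using assms(2) 2 ij by auto
    qed
  qed
qed

definition supp :: "nat \<Rightarrow> 'a::zero poly \<Rightarrow> nat set" where
  "supp n c = {i. i < n \<and> coeff c i \<noteq> 0}"

lemma hweight_supp: "hweight n c = card (supp n c)"
  by (simp add: hweight_def supp_def)

lemma supp_nonempty:
  assumes "degree c < n" "c \<noteq> 0"
  shows "supp n c \<noteq> {}"
  using assms by (auto simp: supp_def intro!: exI[of _ "degree c"])

lemma bch:
  fixes \<beta> :: "'a::field"
  assumes "\<beta> ^ n = 1" "\<forall>k. 0 < k \<and> k < n \<longrightarrow> \<beta> ^ k \<noteq> 1" "n > 0"
    and c: "degree c < n" "c \<noteq> 0"
    and zeros: "\<forall>j<T. poly c (\<beta> powi (s + int j)) = 0"
  shows "T < hweight n c"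
proof (rule ccontr)
  assume "\<not> T < hweight n c"
  hence wT: "card (supp n c) \<le> T" by (simp add: hweight_supp)
  have b0: "\<beta> \<noteq> 0" using assms(1,3) by (metis power_0_left zero_neq_one not_gr0)
  let ?I = "supp n c"
  have finI: "finite ?I" by (simp add: supp_def)
  have injI: "inj_on (\<lambda>i. \<beta> ^ i) ?I"
    by (rule inj_on_subset[OF pow_inj[OF assms(1-3)]]) (auto simp: supp_def)
  have "\<forall>j<card ?I. (\<Sum>i\<in>?I. (coeff c i * \<beta> powi (s * int i)) * (\<beta> ^ i) ^ j) = 0"
  proof (intro allI impI)
    fix j assume "j < card ?I"
    hence "j < T" using wT by simp
    hence "0 = poly c (\<beta> powi (s + int j))" using zeros by simp
    also have "\<dots> = (\<Sum>i<n. coeff c i * (\<beta> powi (s + int j)) ^ i)" by (rule poly_sum_n[OF c(1)])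
    also have "\<dots> = (\<Sum>i\<in>?I. coeff c i * (\<beta> powi (s + int j)) ^ i)"
      by (rule sum.mono_neutral_right) (auto simp: supp_def)
    also have "\<dots> = (\<Sum>i\<in>?I. (coeff c i * \<beta> powi (s * int i)) * (\<beta> ^ i) ^ j)"
    proof (rule sum.cong[OF refl])
      fix i
      have "(\<beta> powi (s + int j)) ^ i = \<beta> powi ((s + int j) * int i)" by (simp add: power_int_power')
      also have "\<dots> = \<beta> powi (s * int i) * \<beta> powi (int j * int i)"
        using b0 by (simp add: distrib_right power_int_add)
      also have "\<beta> powi (int j * int i) = (\<beta> ^ i) ^ j"
        by (simp add: power_mult[symmetric] mult.commute flip: of_nat_mult)
      finally show "coeff c i * (\<beta> powi (s + int j)) ^ i = (coeff c i * \<beta> powi (s * int i)) * (\<beta> ^ i) ^ j"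
        by simp
    qed
    finally show "(\<Sum>i\<in>?I. (coeff c i * \<beta> powi (s * int i)) * (\<beta> ^ i) ^ j) = 0" by simp
  qed
  from vandermonde_zero[OF finI injI this]
  have "\<forall>i\<in>?I. coeff c i = 0" using b0 by simp
  moreover obtain i where "i \<in> ?I" using supp_nonempty[OF c] by blast
  ultimately show False by (auto simp: supp_def)
qed



definition vec :: "nat \<Rightarrow> (nat \<Rightarrow> 'a::field) \<Rightarrow> 'a poly" where
  "vec n f = (\<Sum>i<n. Polynomial.monom (f i) i)"

lemma coeff_vec: "coeff (vec n f) i = (if i < n then f i else 0)"
  by (simp add: vec_def coeff_sum coeff_monom)

lemma degree_vec: "n > 0 \<Longrightarrow> degree (vec n f) < n"
proof -
  assume "n > 0"
  have "degree (vec n f) \<le> n - 1"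
    unfolding vec_def by (rule degree_sum_le) (auto intro: order_trans[OF degree_monom_le])
  thus ?thesis using \<open>n > 0\<close> by linarith
qed

lemma poly_vec: "poly (vec n f) x = (\<Sum>i<n. f i * x ^ i)"
  by (simp add: vec_def poly_sum poly_monom)

lemma power_mod_n: "(a::'a::field) ^ n = 1 \<Longrightarrow> a ^ (x mod n) = a ^ x"
proof -
  assume a: "a ^ n = 1"
  have "(a ^ n) ^ (x div n) * a ^ (x mod n) = a ^ (n * (x div n) + x mod n)"
    by (simp only: power_mult[symmetric] power_add[symmetric])
  also have "n * (x div n) + x mod n = x" by simp
  finally show ?thesis using a by simp
qed

lemma geom_zero:
  assumes "(z::'a::field) ^ n = 1" "z \<noteq> 1"
  shows "(\<Sum>i<n. z ^ i) = 0"
  using geometric_sum[OF assms(2), of n] assms(1) by simp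

lemma dual_zero:
  fixes Z :: "'a::field set"
  assumes "finite Z" "n > 0" "\<forall>a\<in>Z. a ^ n = 1"
    and v: "v \<in> dual_code n (cyclic_code n Z)"
    and g: "\<gamma> ^ n = 1" "\<forall>a\<in>Z. \<gamma> * a \<noteq> 1"
  shows "poly v \<gamma> = 0"
proof -
  let ?u = "vec n (\<lambda>i. \<gamma> ^ i)"
  have "\<forall>a\<in>Z. poly ?u a = 0"
  proof
    fix a assume "a \<in> Z"
    have "poly ?u a = (\<Sum>i<n. (\<gamma> * a) ^ i)" by (simp add: poly_vec power_mult_distrib)
    also have "\<dots> = 0" by (rule geom_zero) (use g assms(3) \<open>a \<in> Z\<close> in \<open>auto simp: power_mult_distrib\<close>)
    finally show "poly ?u a = 0" .
  qed
  hence "?u \<in> cyclic_code n Z" using code_char[OF assms(1-3)] degree_vec[OF assms(2)] by simp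
  hence "(\<Sum>i<n. coeff ?u i * coeff v i) = 0" using v by (simp add: dual_code_def)
  moreover have "degree v < n" using v assms(2) by (simp add: dual_code_def word_len_iff)
  ultimately show ?thesis by (simp add: poly_sum_n coeff_vec mult.commute)
qed

lemma dual_nonzero:
  fixes Z :: "'a::field set"
  assumes "finite Z" "n > 0" "\<forall>a\<in>Z. a ^ n = 1" "a0 \<in> Z"
  shows "vec n (\<lambda>i. a0 ^ i) \<in> dual_code n (cyclic_code n Z)" "vec n (\<lambda>i. a0 ^ i) \<noteq> 0"
proof -
  show "vec n (\<lambda>i. a0 ^ i) \<noteq> 0"
  proof
    assume "vec n (\<lambda>i. a0 ^ i) = 0"
    hence "coeff (vec n (\<lambda>i. a0 ^ i)) 0 = 0" by simp
    thus False using assms(2) by (simp add: coeff_vec)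
  qed
  show "vec n (\<lambda>i. a0 ^ i) \<in> dual_code n (cyclic_code n Z)"
    unfolding dual_code_def
  proof (intro CollectI conjI ballI)
    show "word_len n (vec n (\<lambda>i. a0 ^ i))" using degree_vec[OF assms(2)] word_len_iff[OF assms(2)] by blast
    fix c assume "c \<in> cyclic_code n Z"
    hence c: "degree c < n" "poly c a0 = 0" using code_char[OF assms(1-3)] assms(4) by auto
    show "(\<Sum>i<n. coeff c i * coeff (vec n (\<lambda>i. a0 ^ i)) i) = 0"
      using c poly_sum_n[OF c(1), of a0] by (simp add: coeff_vec)
  qed
qed

lemma rot_inj:
  fixes n t :: nat
  assumes "n > 0"
  shows "inj_on (\<lambda>k. (k + t) mod n) {..<n}"
proof (rule inj_onI)
  fix k k' assume "k \<in> {..<n}" "k' \<in> {..<n}" "(k + t) mod n = (k' + t) mod n"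
  hence "[k + t = k' + t] (mod n)" by (simp add: cong_def)
  hence "[k = k'] (mod n)" by (simp add: cong_add_rcancel_nat)
  thus "k = k'" using \<open>k \<in> {..<n}\<close> \<open>k' \<in> {..<n}\<close> by (simp add: cong_def)
qed

lemma rot_image:
  fixes n t :: nat
  assumes "n > 0"
  shows "(\<lambda>k. (k + t) mod n) ` {..<n} = {..<n}"
  by (rule endo_inj_surj) (use rot_inj[OF assms] assms in auto)

lemma sum_rot:
  fixes n t :: nat
  assumes "n > 0"
  shows "(\<Sum>k<n. f ((k + t) mod n)) = (\<Sum>k<n. f k)"
proof -
  have "(\<Sum>k<n. f k) = sum f ((\<lambda>k. (k + t) mod n) ` {..<n})" using rot_image[OF assms] by simp
  also have "\<dots> = (\<Sum>k<n. f ((k + t) mod n))" by (subst sum.reindex[OF rot_inj[OF assms]]) simp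
  finally show ?thesis by simp
qed

definition rot :: "nat \<Rightarrow> nat \<Rightarrow> 'a::field poly \<Rightarrow> 'a poly" where
  "rot n t w = vec n (\<lambda>k. coeff w ((k + t) mod n))"

lemma poly_rot:
  assumes "n > 0" "degree w < n" "(a::'a::field) ^ n = 1"
  shows "a ^ t * poly (rot n t w) a = poly w a"
proof -
  have "a ^ t * poly (rot n t w) a = (\<Sum>k<n. coeff w ((k + t) mod n) * a ^ ((k + t) mod n))"
    by (simp add: rot_def poly_vec sum_distrib_left power_mod_n[OF assms(3)] power_add mult_ac)
  also have "\<dots> = (\<Sum>k<n. coeff w k * a ^ k)" by (rule sum_rot[OF assms(1)])
  also have "\<dots> = poly w a" by (rule poly_sum_n[symmetric, OF assms(2)])
  finally show ?thesis .
qed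

lemma rot_in_code:
  fixes Z :: "'a::field set"
  assumes "finite Z" "n > 0" "\<forall>a\<in>Z. a ^ n = 1" "u \<in> cyclic_code n Z"
  shows "rot n t u \<in> cyclic_code n Z"
proof -
  have u: "degree u < n" "\<forall>a\<in>Z. poly u a = 0" using assms(4) code_char[OF assms(1-3)] by auto
  have "\<forall>a\<in>Z. poly (rot n t u) a = 0"
  proof
    fix a assume a: "a \<in> Z"
    have an: "a ^ n = 1" using assms(3) a by auto
    hence "a \<noteq> 0" using assms(2) by (metis power_0_left zero_neq_one not_gr0)
    moreover have "a ^ t * poly (rot n t u) a = 0" using poly_rot[OF assms(2) u(1) an] u(2) a by simp
    ultimately show "poly (rot n t u) a = 0" by simp
  qed
  thus ?thesis using code_char[OF assms(1-3)] degree_vec[OF assms(2)] by (simp add: rot_def)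
qed

lemma rot_dual:
  fixes Z :: "'a::field set"
  assumes "finite Z" "n > 0" "\<forall>a\<in>Z. a ^ n = 1" "v \<in> dual_code n (cyclic_code n Z)" "t < n"
  shows "rot n t v \<in> dual_code n (cyclic_code n Z)"
  unfolding dual_code_def
proof (intro CollectI conjI ballI)
  show "word_len n (rot n t v)" by (simp add: rot_def word_len_iff[OF assms(2)] degree_vec[OF assms(2)])
  fix u assume u: "u \<in> cyclic_code n Z"
  have key: "((k + (n - t)) mod n + t) mod n = k" if "k < n" for k
  proof -
    have "((k + (n - t)) mod n + t) mod n = (k + (n - t) + t) mod n" by (simp add: mod_add_left_eq)
    also have "k + (n - t) + t = k + n" using assms(5) by simp
    finally show ?thesis using that by simp
  qed
  have "(\<Sum>k<n. coeff u k * coeff (rot n t v) k) = (\<Sum>k<n. coeff u k * coeff v ((k + t) mod n))"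
    by (simp add: rot_def coeff_vec)
  also have "\<dots> = (\<Sum>k<n. coeff u ((k + (n - t)) mod n) * coeff v (((k + (n - t)) mod n + t) mod n))"
    by (rule sum_rot[symmetric, OF assms(2)])
  also have "\<dots> = (\<Sum>k<n. coeff (rot n (n - t) u) k * coeff v k)"
    by (rule sum.cong[OF refl]) (simp add: key rot_def coeff_vec)
  also have "\<dots> = 0"
    using rot_in_code[OF assms(1-3) u, of "n - t"] assms(4) by (simp add: dual_code_def)
  finally show "(\<Sum>k<n. coeff u k * coeff (rot n t v) k) = 0" .
qed

lemma supp_rot:
  assumes "n > 0"
  shows "supp n (rot n t v) = {k. k < n \<and> (k + t) mod n \<in> supp n v}"
  using assms by (auto simp: supp_def rot_def coeff_vec)

lemma card_supp_rot:
  assumes "n > 0"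
  shows "card (supp n (rot n t v)) = card (supp n v)"
proof -
  have "supp n (rot n t v) = {k\<in>{..<n}. (k + t) mod n \<in> supp n v}" using supp_rot[OF assms] by auto
  hence "(\<lambda>k. (k + t) mod n) ` supp n (rot n t v) = supp n v"
    using rot_image[OF assms, of t] by (auto simp: supp_def)
  moreover have "inj_on (\<lambda>k. (k + t) mod n) (supp n (rot n t v))"
    by (rule inj_on_subset[OF rot_inj[OF assms]]) (auto simp: supp_def)
  ultimately show ?thesis using card_image by metis
qed



lemma frobp_linear:
  assumes "frob_ok q TYPE('a::field)"
  shows "frobp q [:- (z::'a), 1:] = [:- (z ^ q), 1:]"
  by (rule poly_eqI) (auto simp: coeff_frobp[OF assms] coeff_pCons frob_uminus'[OF assms]
      frob_zero[OF assms] split: nat.splits)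

lemma frobp_gen_poly:
  fixes Z :: "'a::field set"
  assumes ok: "frob_ok q TYPE('a)" and fin: "finite Z"
    and inv: "\<forall>z\<in>Z. inverse z \<in> Z" and zq: "\<forall>z\<in>Z. z ^ q = inverse z"
  shows "frobp q (gen_poly Z) = gen_poly Z"
proof -
  have "frobp q (gen_poly Z) = (\<Prod>z\<in>Z. [:- (z ^ q), 1:])"
    by (simp add: gen_poly_def frobp_prod[OF ok] frobp_linear[OF ok])
  also have "\<dots> = (\<Prod>z\<in>Z. [:- inverse z, 1:])" using zq by (intro prod.cong) auto
  also have "\<dots> = (\<Prod>w\<in>inverse ` Z. [:- w, 1:])"
    by (subst prod.reindex) (auto intro: inj_onI)
  also have "inverse ` Z = Z"
  proof
    show "inverse ` Z \<subseteq> Z" using inv by auto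
    show "Z \<subseteq> inverse ` Z"
    proof
      fix z assume "z \<in> Z"
      hence "inverse (inverse z) = z" "inverse z \<in> Z" using inv by auto
      thus "z \<in> inverse ` Z" by (metis image_eqI)
    qed
  qed
  finally show ?thesis by (simp add: gen_poly_def)
qed

locale rootsetup =
  fixes \<beta> :: "'a::field" and n :: nat
  assumes bn: "\<beta> ^ n = 1" and bord: "\<forall>k. 0 < k \<and> k < n \<longrightarrow> \<beta> ^ k \<noteq> 1" and npos: "n > 0"
begin

lemma b0: "\<beta> \<noteq> 0" using bn npos by (metis power_0_left zero_neq_one not_gr0)

definition e :: "int \<Rightarrow> 'a" where "e i = \<beta> powi i"

lemma e_mod: "e i = \<beta> ^ nat (i mod int n)"
proof -
  have "i = int n * (i div int n) + i mod int n" by simp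
  hence "e i = \<beta> powi (int n * (i div int n)) * \<beta> powi (i mod int n)"
    unfolding e_def using b0 by (metis power_int_add)
  also have "\<beta> powi (int n * (i div int n)) = 1"
    by (simp add: power_int_mult bn)
  also have "\<beta> powi (i mod int n) = \<beta> ^ nat (i mod int n)"
    using npos by (metis power_int_of_nat pos_mod_sign of_nat_0_less_iff int_nat_eq)
  finally show ?thesis by simp
qed

lemma e_eq_iff: "e i = e j \<longleftrightarrow> i mod int n = j mod int n"
proof
  assume "e i = e j"
  hence "\<beta> ^ nat (i mod int n) = \<beta> ^ nat (j mod int n)" by (simp add: e_mod)
  moreover have "nat (i mod int n) \<in> {..<n}" "nat (j mod int n) \<in> {..<n}" using npos
    by (auto simp: nat_less_iff)
  ultimately have "nat (i mod int n) = nat (j mod int n)" using pow_inj[OF bn bord npos] inj_onD by metis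
  moreover have "0 \<le> i mod int n" "0 \<le> j mod int n" using npos by simp_all
  ultimately show "i mod int n = j mod int n" by (simp add: eq_nat_nat_iff)
qed (simp add: e_mod)

lemma e_pow_n: "e i ^ n = 1"
proof -
  have "e i ^ n = (\<beta> ^ n) ^ nat (i mod int n)" by (simp add: e_mod power_mult[symmetric] mult.commute)
  thus ?thesis using bn by simp
qed

lemma e_mult: "e i * e j = e (i + j)"
  unfolding e_def using b0 by (simp add: power_int_add)

lemma e_inverse: "inverse (e i) = e (- i)"
  unfolding e_def by (simp add: power_int_minus)

lemma e_nat: "e (int k) = \<beta> ^ k"
  by (simp add: e_def)

lemma e_nz: "e i \<noteq> 0" using b0 by (simp add: e_def)

lemma e_eq_1_iff: "e i = 1 \<longleftrightarrow> i mod int n = 0"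
  using e_eq_iff[of i 0] by (simp add: e_def)

lemma e_inj_window:
  assumes "J \<subseteq> {lo..<lo + int n}"
  shows "inj_on e J"
proof (rule inj_onI)
  fix i j assume ij: "i \<in> J" "j \<in> J" "e i = e j"
  hence "i mod int n = j mod int n" by (simp add: e_eq_iff)
  hence "int n dvd (i - j)" by (simp add: mod_eq_dvd_iff)
  then obtain c where c: "i - j = int n * c" by (elim dvdE)
  have "i \<in> {lo..<lo + int n}" "j \<in> {lo..<lo + int n}" using ij(1,2) assms by auto
  hence bnd: "\<bar>i - j\<bar> < int n" by auto
  show "i = j"
  proof (rule ccontr)
    assume "i \<noteq> j"
    hence "c \<noteq> 0" using c by auto
    hence "\<bar>c\<bar> \<ge> 1" by linarith
    hence "\<bar>int n * c\<bar> \<ge> int n" using npos by (simp add: abs_mult)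
    thus False using bnd c by simp
  qed
qed

lemma bch_e:
  assumes "degree c < n" "c \<noteq> 0" "\<forall>j<T. poly c (e (s + int j)) = 0"
  shows "T < hweight n c"
  using bch[OF bn bord npos assms(1,2)] assms(3) by (simp add: e_def)

end



locale setup2 = rootsetup \<beta> n for \<beta> :: "'a::field" and n :: nat +
  fixes M D N :: nat
  assumes nN: "n = 2 * N + 1" and M1: "M \<ge> 1" and D1: "D \<ge> 1" and MDN: "M + 2 * D \<le> N"
begin

definition "IA = {- int M..int M - 1} \<union> {int N}"
definition "IB = {- (int D - 1)..int D}"
definition "J1 = {- (int M + int D - 1)..int M + int D - 1}"
definition "J2 = {int N - int D + 1..int N + int D}"
definition "J = J1 \<union> J2"

lemma memI: "k = i + j \<Longrightarrow> i \<in> IA \<Longrightarrow> j \<in> IB \<Longrightarrow> k \<in> {i + j | i j. i \<in> IA \<and> j \<in> IB}"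
  by blast

lemma sumset: "{i + j | i j. i \<in> IA \<and> j \<in> IB} = J"
proof
  show "{i + j | i j. i \<in> IA \<and> j \<in> IB} \<subseteq> J"
    by (auto simp: IA_def IB_def J_def J1_def J2_def)
  show "J \<subseteq> {i + j | i j. i \<in> IA \<and> j \<in> IB}"
  proof
    fix k assume "k \<in> J"
    then consider "k \<in> J1" | "k \<in> J2" by (auto simp: J_def)
    thus "k \<in> {i + j | i j. i \<in> IA \<and> j \<in> IB}"
    proof cases
      case 1
      hence k: "- (int M + int D - 1) \<le> k" "k \<le> int M + int D - 1" by (auto simp: J1_def)
      consider "- (int D - 1) \<le> k \<and> k \<le> int D" | "k > int D" | "k < - (int D - 1)" by linarith
      thus ?thesis
      proof cases
        case 1 thus ?thesis using M1 by (intro memI[of k 0 k]) (auto simp: IA_def IB_def)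
      next
        case 2 thus ?thesis using k M1 D1
          by (intro memI[of k "k - int D" "int D"]) (auto simp: IA_def IB_def)
      next
        case 3 thus ?thesis using k M1 D1
          by (intro memI[of k "k + int D - 1" "- (int D - 1)"]) (auto simp: IA_def IB_def)
      qed
    next
      case 2
      thus ?thesis using D1 by (intro memI[of k "int N" "k - int N"]) (auto simp: J2_def IA_def IB_def)
    qed
  qed
qed

lemma AB_eq: "set_prod (e ` IA) (e ` IB) = e ` J"
proof -
  have "set_prod (e ` IA) (e ` IB) = e ` {i + j | i j. i \<in> IA \<and> j \<in> IB}"
  proof
    show "set_prod (e ` IA) (e ` IB) \<subseteq> e ` {i + j | i j. i \<in> IA \<and> j \<in> IB}"
    proof
      fix z assume "z \<in> set_prod (e ` IA) (e ` IB)"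
      then obtain i j where ij: "i \<in> IA" "j \<in> IB" "z = e i * e j" unfolding set_prod_def by blast
      hence "z = e (i + j)" "i + j \<in> {i + j | i j. i \<in> IA \<and> j \<in> IB}" by (auto simp: e_mult)
      thus "z \<in> e ` {i + j | i j. i \<in> IA \<and> j \<in> IB}" by blast
    qed
    show "e ` {i + j | i j. i \<in> IA \<and> j \<in> IB} \<subseteq> set_prod (e ` IA) (e ` IB)"
    proof
      fix z assume "z \<in> e ` {i + j | i j. i \<in> IA \<and> j \<in> IB}"
      then obtain i j where ij: "i \<in> IA" "j \<in> IB" "z = e (i + j)" by blast
      hence "z = e i * e j" "e i \<in> e ` IA" "e j \<in> e ` IB" by (auto simp: e_mult)
      thus "z \<in> set_prod (e ` IA) (e ` IB)" unfolding set_prod_def by blast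
    qed
  qed
  thus ?thesis using sumset by simp
qed

lemma J_window: "J \<subseteq> {- (int M + int D - 1)..<- (int M + int D - 1) + int n}"
  using nN MDN by (auto simp: J_def J1_def J2_def)

lemma card_J: "card J = 2 * M + 4 * D - 1"
proof -
  have "J1 \<inter> J2 = {}" using MDN by (auto simp: J1_def J2_def)
  hence "card J = card J1 + card J2" by (simp add: J_def J1_def J2_def card_Un_disjoint)
  moreover have "card J1 = 2 * M + 2 * D - 1" using M1 by (simp add: J1_def)
  moreover have "card J2 = 2 * D" by (simp add: J2_def)
  ultimately show ?thesis using M1 by simp
qed

lemma card_AB: "card (e ` J) = 2 * M + 4 * D - 1"
  using card_image[OF e_inj_window[OF J_window]] card_J by simp

lemma finite_J: "finite J" by (simp add: J_def J1_def J2_def)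
lemma finite_IA: "finite IA" by (simp add: IA_def)

lemma AB_inverse: "z \<in> e ` J \<Longrightarrow> inverse z \<in> e ` J"
proof -
  assume "z \<in> e ` J"
  then obtain k where k: "k \<in> J" "z = e k" by auto
  show "inverse z \<in> e ` J"
  proof (cases "k \<in> J1")
    case True
    hence "- k \<in> J" by (auto simp: J_def J1_def)
    thus ?thesis using k by (simp add: e_inverse)
  next
    case False
    hence "k \<in> J2" using k by (auto simp: J_def)
    hence "- k + int n \<in> J" using nN by (auto simp: J_def J2_def)
    moreover have "e (- k) = e (- k + int n)" by (simp add: e_eq_iff)
    ultimately show ?thesis using k by (simp add: e_inverse)
  qed
qed

lemma dual_cond:
  assumes "int M + 1 \<le> k" "k \<le> int N" "a \<in> e ` IA"
  shows "e k * a \<noteq> 1"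
proof -
  obtain i where i: "i \<in> IA" "a = e i" using assms(3) by auto
  have "1 \<le> k + i" "k + i < int n" using i(1) assms(1,2) nN MDN by (auto simp: IA_def)
  hence "(k + i) mod int n \<noteq> 0" by simp
  thus ?thesis using i by (simp add: e_mult e_eq_1_iff)
qed

lemma J1_sub: "j < 2 * M + 2 * D - 1 \<Longrightarrow> - (int M + int D - 1) + int j \<in> J"
  by (auto simp: J_def J1_def)

lemma IB_sub: "j < 2 * D \<Longrightarrow> - (int D - 1) + int j \<in> IB"
  by (auto simp: IB_def)

end



locale setup3 = setup2 \<beta> n M D N for \<beta> :: "'a::field" and n M D N :: nat +
  fixes q :: nat
  assumes ok: "frob_ok q TYPE('a)" and cardFq: "card (Fq q :: 'a set) = q" and q2: "q \<ge> 2"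
    and nq: "n dvd q + 1"
begin

abbreviation "A \<equiv> e ` IA"
abbreviation "B \<equiv> e ` IB"
abbreviation "Z \<equiv> e ` J"
abbreviation "C \<equiv> cyclic_code_Fq q n Z"
abbreviation "DA \<equiv> dual_code n (cyclic_code n A)"

lemma rootsA: "\<forall>a\<in>A. a ^ n = 1" by (auto simp: e_pow_n)
lemma rootsZ: "\<forall>a\<in>Z. a ^ n = 1" by (auto simp: e_pow_n)
lemma finA: "finite A" using finite_IA by simp
lemma finZ: "finite Z" using finite_J by simp

lemma Zq: "\<forall>z\<in>Z. z ^ q = inverse z"
proof
  fix z assume "z \<in> Z"
  hence zn: "z ^ n = 1" and z0: "z \<noteq> 0" by (auto simp: e_pow_n e_nz)
  obtain c where c: "q + 1 = n * c" using nq by (elim dvdE)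
  have "z ^ q * z = (z ^ n) ^ c" by (simp add: power_mult[symmetric] c[symmetric])
  hence "z ^ q * z = 1" using zn by simp
  thus "z ^ q = inverse z" using z0 by (simp add: field_simps)
qed

lemma frobgen: "frobp q (gen_poly Z) = gen_poly Z"
  by (rule frobp_gen_poly[OF ok finZ]) (use AB_inverse Zq in auto)

lemma Cchar: "C = {u. degree u < n \<and> frobp q u = u \<and> (\<forall>z\<in>Z. poly u z = 0)}"
  by (rule codeFq_char[OF ok frobgen finZ npos rootsZ])

lemma Ccard: "card C = q ^ (n - (2 * M + 4 * D - 1))"
proof -
  have "card Z < n" using card_AB nN MDN by simp
  thus ?thesis using codeFq_card[OF ok frobgen finZ npos rootsZ _ cardFq] card_AB by simp
qed

lemma Cweight:
  assumes "c \<in> C" "c \<noteq> 0"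
  shows "2 * M + 2 * D - 1 < hweight n c"
proof -
  have c: "degree c < n" "\<forall>z\<in>Z. poly c z = 0" using assms(1) Cchar by auto
  show ?thesis
  proof (rule bch_e[OF c(1) assms(2)], intro allI impI)
    fix j assume "j < 2 * M + 2 * D - 1"
    thus "poly c (e (- (int M + int D - 1) + int j)) = 0" using c(2) J1_sub by blast
  qed
qed

lemma dual_weight:
  assumes "v \<in> DA" "v \<noteq> 0"
  shows "N - M < hweight n v"
proof -
  have dv: "degree v < n" using assms(1) npos by (simp add: dual_code_def word_len_iff)
  show ?thesis
  proof (rule bch_e[OF dv assms(2)], intro allI impI)
    fix j assume j: "j < N - M"
    show "poly v (e (int M + 1 + int j)) = 0"
    proof (rule dual_zero[OF finA npos rootsA assms(1)])
      show "e (int M + 1 + int j) ^ n = 1" by (rule e_pow_n)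
      show "\<forall>a\<in>A. e (int M + 1 + int j) * a \<noteq> 1"
        using dual_cond[of "int M + 1 + int j"] j by auto
    qed
  qed
qed

lemma Cdiff: "c1 \<in> C \<Longrightarrow> c2 \<in> C \<Longrightarrow> c1 - c2 \<in> C"
  unfolding Cchar by (auto simp: degree_diff_less frobp_diff[OF ok])

lemma local_lemma:
  assumes v: "v \<in> DA" and x: "x \<in> C" and ex: "\<exists>i\<in>supp n v. coeff x i \<noteq> 0"
  shows "2 * D < card {i\<in>supp n v. coeff x i \<noteq> 0}"
proof -
  have xc: "degree x < n" "\<forall>z\<in>Z. poly x z = 0" using x Cchar by auto
  define w where "w = vec n (\<lambda>i. coeff x i * coeff v i)"
  have suppw: "supp n w = {i\<in>supp n v. coeff x i \<noteq> 0}" by (auto simp: w_def supp_def coeff_vec)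
  have w0: "w \<noteq> 0"
  proof
    assume "w = 0"
    hence "supp n w = {}" by (simp add: supp_def)
    thus False using ex suppw by auto
  qed
  have zw: "poly w (e c) = 0" if c: "c \<in> IB" for c
  proof -
    let ?g = "e c"
    define u where "u = vec n (\<lambda>i. coeff x i * ?g ^ i)"
    have "\<forall>a\<in>A. poly u a = 0"
    proof
      fix a assume a: "a \<in> A"
      have "poly u a = (\<Sum>i<n. coeff x i * (a * ?g) ^ i)"
        by (simp add: u_def poly_vec power_mult_distrib mult_ac)
      also have "\<dots> = poly x (a * ?g)" by (rule poly_sum_n[symmetric, OF xc(1)])
      also have "a * ?g \<in> Z" using a c AB_eq[symmetric] unfolding set_prod_def by blast
      hence "poly x (a * ?g) = 0" using xc(2) by blast
      finally show "poly u a = 0" .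
    qed
    hence "u \<in> cyclic_code n A" using code_char[OF finA npos rootsA] degree_vec[OF npos] by (simp add: u_def)
    hence "(\<Sum>i<n. coeff u i * coeff v i) = 0" using v by (simp add: dual_code_def)
    thus "poly w ?g = 0" by (simp add: w_def u_def poly_vec coeff_vec mult_ac)
  qed
  have "2 * D < hweight n w"
  proof (rule bch_e[OF degree_vec[OF npos] w0[unfolded w_def], folded w_def], intro allI impI)
    fix j assume "j < 2 * D"
    thus "poly w (e (- (int D - 1) + int j)) = 0" using zw IB_sub by blast
  qed
  thus ?thesis using suppw by (simp add: hweight_supp)
qed

end



context setup3 begin

definition "kk = 2 * N + 2 - 2 * M - 4 * D"

lemma kk_eq: "n - (2 * M + 4 * D - 1) = kk" using nN M1 D1 MDN by (simp add: kk_def)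

lemma kk_ge: "kk \<ge> 2" using MDN by (simp add: kk_def)

lemma code_dim_C: "code_dim q C = kk"
proof -
  have "card C = q ^ kk" using Ccard kk_eq by simp
  moreover have "card C = q ^ k \<Longrightarrow> k = kk" for k
    using \<open>card C = q ^ kk\<close> q2 by (simp add: power_inject_exp)
  ultimately show ?thesis unfolding code_dim_def by (intro the_equality) auto
qed

lemma Cfin: "finite C"
proof -
  have "card C > 0" using Ccard q2 by simp
  thus ?thesis by (rule card_ge_0_finite)
qed

definition "W = {hweight n c | c. c \<in> DA \<and> c \<noteq> 0}"

lemma W_ne: "W \<noteq> {}"
proof -
  have "e (int N) \<in> A" by (simp add: IA_def)
  from dual_nonzero[OF finA npos rootsA this] show ?thesis unfolding W_def by blast
qed

lemma W_fin: "finite W"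
proof -
  have hw: "hweight n c \<le> n" for c :: "'a poly"
  proof -
    have "card (supp n c) \<le> card {..<n}" by (rule card_mono) (auto simp: supp_def)
    thus ?thesis by (simp add: hweight_supp)
  qed
  have "W \<subseteq> {..n}" unfolding W_def using hw by auto
  thus ?thesis using finite_subset by blast
qed

lemma dmin:
  obtains v where "v \<in> DA" "v \<noteq> 0" "hweight n v = min_dist n DA"
    "\<And>c. c \<in> DA \<Longrightarrow> c \<noteq> 0 \<Longrightarrow> min_dist n DA \<le> hweight n c"
proof -
  have md: "min_dist n DA = Min W" by (simp add: min_dist_def W_def)
  have "Min W \<in> W" using W_ne W_fin by simp
  then obtain v where "v \<in> DA" "v \<noteq> 0" "hweight n v = Min W" unfolding W_def by auto
  moreover have "\<And>c. c \<in> DA \<Longrightarrow> c \<noteq> 0 \<Longrightarrow> Min W \<le> hweight n c"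
  proof -
    fix c assume "c \<in> DA" "c \<noteq> 0"
    hence "hweight n c \<in> W" by (auto simp: W_def)
    thus "Min W \<le> hweight n c" using W_fin by (rule Min_le[rotated])
  qed
  ultimately show ?thesis using that md by auto
qed

lemma dA_ge: "N - M < min_dist n DA"
proof -
  obtain v where "v \<in> DA" "v \<noteq> 0" "hweight n v = min_dist n DA" by (rule dmin)
  thus ?thesis using dual_weight by metis
qed

lemma LRC: "is_LRC n C (int (min_dist n DA) - int (2 * D + 1) + 1) (2 * D + 1)"
proof -
  obtain v where v: "v \<in> DA" "v \<noteq> 0" "hweight n v = min_dist n DA" by (rule dmin)
  have dv: "degree v < n" using v(1) npos by (simp add: dual_code_def word_len_iff)
  obtain j0 where j0: "j0 \<in> supp n v" using supp_nonempty[OF dv v(2)] by blast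
  have j0n: "j0 < n" using j0 by (simp add: supp_def)
  have r1: "int (min_dist n DA) - int (2 * D + 1) + 1 \<ge> 1" using dA_ge MDN by linarith
  have "has_locality n C (int (min_dist n DA) - int (2 * D + 1) + 1) (2 * D + 1) i" if i: "i < n" for i
  proof -
    define t where "t = (j0 + n - i) mod n"
    have tn: "t < n" using npos by (simp add: t_def)
    define v' where "v' = rot n t v"
    have v'd: "v' \<in> DA" unfolding v'_def by (rule rot_dual[OF finA npos rootsA v(1) tn])
    have "(i + t) mod n = (i + (j0 + n - i)) mod n" by (simp add: t_def mod_add_right_eq)
    also have "i + (j0 + n - i) = j0 + n" using i by simp
    finally have "(i + t) mod n = j0" using j0n by simp
    hence iS: "i \<in> supp n v'" using supp_rot[OF npos, of t v] j0 i by (simp add: v'_def)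
    have cardS: "card (supp n v') = min_dist n DA"
      using card_supp_rot[OF npos, of t v] v(3) by (simp add: v'_def hweight_supp)
    show ?thesis unfolding has_locality_def
    proof (intro exI conjI)
      show "supp n v' \<subseteq> {..<n}" by (auto simp: supp_def)
      show "i \<in> supp n v'" by (rule iS)
      show "int (card (supp n v')) \<le> int (min_dist n DA) - int (2 * D + 1) + 1 + int (2 * D + 1) - 1"
        using cardS by simp
      show "punct_min_dist_ge (supp n v') C (2 * D + 1)"
        unfolding punct_min_dist_ge_def using local_lemma[OF v'd] by fastforce
    qed
  qed
  thus ?thesis unfolding is_LRC_def using r1 D1 by auto
qed

lemma Cfq: "c \<in> C \<Longrightarrow> coeff c i \<in> Fq q"
  using Cchar frobp_fixed_iff[OF ok] by auto

lemma upper: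
  assumes hyp: "min_dist n DA < kk + 2 * D"
  obtains d where "d \<in> C" "d \<noteq> 0" "hweight n d \<le> 2 * M + 2 * D"
proof -
  obtain v where v: "v \<in> DA" "v \<noteq> 0" "hweight n v = min_dist n DA" by (rule dmin)
  let ?dA = "min_dist n DA"
  define S where "S = supp n v"
  have cS: "card S = ?dA" using v(3) by (simp add: S_def hweight_supp)
  have Sn: "S \<subseteq> {..<n}" by (auto simp: S_def supp_def)
  have dA2: "2 * D < ?dA" using dA_ge MDN by linarith
  obtain S' where S': "S' \<subseteq> S" "card S' = ?dA - 2 * D" "finite S'"
    using obtain_subset_with_card_n[of "?dA - 2 * D" S] cS by auto
  have "card ({..<n} - S) = n - ?dA" using Sn cS by (simp add: card_Diff_subset finite_subset)
  moreover have "kk - 1 - (?dA - 2 * D) \<le> n - ?dA" using hyp dA2 nN MDN by (simp add: kk_def)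
  ultimately obtain E where E: "E \<subseteq> {..<n} - S" "card E = kk - 1 - (?dA - 2 * D)" "finite E"
    using obtain_subset_with_card_n[of "kk - 1 - (?dA - 2 * D)" "{..<n} - S"] by auto
  define U where "U = S' \<union> E"
  have SE: "S' \<inter> E = {}" using S'(1) E(1) by auto
  have cU: "card U = kk - 1" using S'(2,3) E(2,3) SE hyp dA2 by (simp add: U_def card_Un_disjoint)
  have fU: "finite U" using S'(3) E(3) by (simp add: U_def)
  let ?rho = "\<lambda>c. restrict (coeff c) U"
  have "\<not> inj_on ?rho C"
  proof
    assume inj: "inj_on ?rho C"
    have "?rho ` C \<subseteq> PiE U (\<lambda>_. Fq q)" using Cfq by auto
    moreover have "finite (PiE U (\<lambda>_. Fq q :: 'a set))"
      using fU cardFq q2 by (intro finite_PiE) (auto intro: card_ge_0_finite)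
    ultimately have "card C \<le> card (PiE U (\<lambda>_. Fq q :: 'a set))" using card_inj_on_le[OF inj] by blast
    also have "\<dots> = q ^ (kk - 1)" using card_PiE[OF fU, of "\<lambda>_. Fq q :: 'a set"] cardFq cU by simp
    finally have "q ^ kk \<le> q ^ (kk - 1)" using Ccard kk_eq by simp
    moreover have "q ^ (kk - 1) < q ^ kk" using q2 kk_ge by (intro power_strict_increasing) auto
    ultimately show False by simp
  qed
  then obtain c1 c2 where c: "c1 \<in> C" "c2 \<in> C" "c1 \<noteq> c2" "?rho c1 = ?rho c2"
    unfolding inj_on_def by blast
  define d where "d = c1 - c2"
  have dC: "d \<in> C" using Cdiff c by (simp add: d_def)
  have d0: "d \<noteq> 0" using c(3) by (simp add: d_def)
  have dU: "coeff d i = 0" if "i \<in> U" for i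
  proof -
    have "?rho c1 i = ?rho c2 i" using c(4) by simp
    thus ?thesis using that by (simp add: d_def)
  qed
  have dS: "\<forall>i\<in>S. coeff d i = 0"
  proof (rule ccontr)
    assume "\<not> (\<forall>i\<in>S. coeff d i = 0)"
    hence "\<exists>i\<in>supp n v. coeff d i \<noteq> 0" by (auto simp: S_def)
    from local_lemma[OF v(1) dC this]
    have "2 * D < card {i\<in>S. coeff d i \<noteq> 0}" by (simp add: S_def)
    moreover have "{i\<in>S. coeff d i \<noteq> 0} \<subseteq> S - S'" using dU by (auto simp: U_def)
    hence "card {i\<in>S. coeff d i \<noteq> 0} \<le> card (S - S')"
      using Sn by (intro card_mono) (auto intro: finite_subset)
    moreover have "card (S - S') = 2 * D" using S' cS dA2 Sn
      by (simp add: card_Diff_subset finite_subset)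
    ultimately show False by simp
  qed
  have "supp n d \<subseteq> ({..<n} - S) - E" using dS dU by (auto simp: supp_def U_def)
  hence "card (supp n d) \<le> card (({..<n} - S) - E)" by (intro card_mono) auto
  also have "\<dots> = n - ?dA - (kk - 1 - (?dA - 2 * D))"
    using E \<open>card ({..<n} - S) = n - ?dA\<close> by (simp add: card_Diff_subset)
  also have "\<dots> = 2 * M + 2 * D" using hyp dA2 nN MDN by (simp add: kk_def)
  finally show ?thesis using that dC d0 by (simp add: hweight_supp)
qed

lemma min_dist_C:
  assumes hyp: "min_dist n DA < kk + 2 * D"
  shows "min_dist n C = 2 * M + 2 * D"
proof -
  obtain d where d: "d \<in> C" "d \<noteq> 0" "hweight n d \<le> 2 * M + 2 * D" using upper[OF hyp] by blast
  let ?V = "{hweight n c | c. c \<in> C \<and> c \<noteq> 0}"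
  have fin: "finite ?V" using Cfin by simp
  have "hweight n d \<in> ?V" using d by auto
  hence "Min ?V \<le> 2 * M + 2 * D" using fin d(3) by (meson Min_le order_trans)
  moreover have "Min ?V \<in> ?V" using fin \<open>hweight n d \<in> ?V\<close> by (intro Min_in) auto
  hence "2 * M + 2 * D \<le> Min ?V" using Cweight by fastforce
  ultimately show ?thesis by (simp add: min_dist_def)
qed

end


lemma alpha_dvd:
  fixes \<alpha> :: "'a::field"
  assumes "\<alpha> ^ n = 1" "\<forall>k. 0 < k \<and> k < n \<longrightarrow> \<alpha> ^ k \<noteq> 1" "n > 0" "\<alpha> ^ j = 1"
  shows "n dvd j"
proof -
  have "\<alpha> ^ (j mod n) = 1" using power_mod_n[OF assms(1)] assms(4) by simp
  moreover have "j mod n < n" using assms(3) by simp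
  ultimately have "j mod n = 0" using assms(2) by (meson not_gr0)
  thus ?thesis by (simp add: dvd_eq_mod_eq_0)
qed

theorem corollary5p6:
  fixes \<alpha> :: "'a::{field, finite}"
    and q n m b \<delta> :: nat
  assumes "\<exists>p k. prime p \<and> k > 0 \<and> q = p ^ k"
    and "card (UNIV :: 'a set) = q ^ 2"
    and "odd n" and "n dvd q + 1"
    and "\<alpha> ^ n = 1" and "\<forall>k. 0 < k \<and> k < n \<longrightarrow> \<alpha> ^ k \<noteq> 1"
    and "m > 0" and "even m"
    and "b > 0" and "coprime b n"
    and "odd \<delta>" and "3 \<le> \<delta>" and "2 * int \<delta> \<le> int n - int m + 1"
    and A_def: "A = {\<alpha> powi (j * int b) | j. - (int m div 2) \<le> j \<and> j \<le> (int m - 2) div 2}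
                 \<union> {\<alpha> ^ (((n - 1) div 2) * b)}"
    and B_def: "B = {\<alpha> powi (j * int b) | j. - ((int \<delta> - 3) div 2) \<le> j \<and> j \<le> (int \<delta> - 1) div 2}"
    and dA_def: "dA = min_dist n (dual_code n (cyclic_code n A))"
  shows "is_LRC n (cyclic_code_Fq q n (set_prod A B)) (int dA - int \<delta> + 1) \<delta>
         \<and> int (code_dim q (cyclic_code_Fq q n (set_prod A B))) = int n - int m - 2 * int \<delta> + 3
         \<and> (int \<delta> - 2 < int n - int m - int dA \<longrightarrow>
              optimal_LRC (int n) (int (code_dim q (cyclic_code_Fq q n (set_prod A B))))
                 (int (min_dist n (cyclic_code_Fq q n (set_prod A B)))) (int dA - int \<delta> + 1) (int \<delta>)
            \<and> min_dist n (cyclic_code_Fq q n (set_prod A B)) = m + \<delta> - 1)"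
proof -
  obtain p k where pk: "prime p" "k > 0" "q = p ^ k" using assms(1) by blast
  have card: "card (UNIV :: 'a set) = (p ^ k) ^ 2" using assms(2) pk(3) by simp
  have ch: "CHAR('a) = p" by (rule char_eq_p[OF pk(1,2) card])
  have ok: "frob_ok q TYPE('a)" by (rule frob_ok_intro[OF pk(1) ch pk(3)])
  have cFq: "card (Fq q :: 'a set) = q" by (rule card_Fq[OF pk assms(2)])
  have p2: "p \<ge> 2" using pk(1) prime_ge_2_nat by blast
  have "p \<le> p ^ k" using pk(2) p2 by (simp add: self_le_power)
  hence q2: "q \<ge> 2" using p2 pk(3) by linarith
  define N where "N = (n - 1) div 2"
  have nN: "n = 2 * N + 1" using assms(3) unfolding N_def by presburger
  have npos: "n > 0" using nN by simp
  define M where "M = m div 2"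
  have mM: "m = 2 * M" using assms(8) by (simp add: M_def)
  have M1: "M \<ge> 1" using assms(7) mM by simp
  define D where "D = (\<delta> - 1) div 2"
  have dD: "\<delta> = 2 * D + 1" using assms(11) unfolding D_def by presburger
  have D1: "D \<ge> 1" using assms(12) dD by simp
  have MDN: "M + 2 * D \<le> N" using assms(13) nN mM dD by simp
  define \<beta> where "\<beta> = \<alpha> ^ b"
  have "\<beta> ^ n = (\<alpha> ^ n) ^ b" unfolding \<beta>_def by (metis power_mult mult.commute)
  hence bn: "\<beta> ^ n = 1" using assms(5) by simp
  have bord: "\<forall>k. 0 < k \<and> k < n \<longrightarrow> \<beta> ^ k \<noteq> 1"
  proof (intro allI impI)
    fix j assume j: "0 < j \<and> j < n"
    show "\<beta> ^ j \<noteq> 1"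
    proof
      assume "\<beta> ^ j = 1"
      hence "\<alpha> ^ (b * j) = 1" by (simp add: \<beta>_def power_mult)
      hence "n dvd b * j" by (rule alpha_dvd[OF assms(5,6) npos])
      hence "n dvd j" using assms(10) by (metis coprime_commute coprime_dvd_mult_right_iff)
      thus False using j by (simp add: nat_dvd_not_less)
    qed
  qed
  interpret S: setup3 \<beta> n M D N q
    by unfold_locales (use bn bord npos nN M1 D1 MDN ok cFq q2 assms(4) in auto)
  have powi_eq: "\<alpha> powi (j * int b) = S.e j" for j
  proof -
    have "\<alpha> powi (j * int b) = \<alpha> powi (int b * j)" by (simp only: mult.commute)
    also have "\<dots> = (\<alpha> powi int b) powi j" by (rule power_int_mult)
    also have "\<dots> = (\<alpha> ^ b) powi j" by (simp only: power_int_of_nat)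
    finally have "\<alpha> powi (j * int b) = \<beta> powi j" unfolding \<beta>_def .
    thus ?thesis by (simp only: S.e_def)
  qed
  have Aeq: "A = S.e ` S.IA"
  proof -
    have "{\<alpha> powi (j * int b) | j. - (int m div 2) \<le> j \<and> j \<le> (int m - 2) div 2}
          = S.e ` {- int M..int M - 1}"
      using mM by (auto simp: powi_eq)
    moreover have "\<alpha> ^ (((n - 1) div 2) * b) = S.e (int N)"
    proof -
      have "\<alpha> ^ (((n - 1) div 2) * b) = \<beta> ^ N" unfolding \<beta>_def N_def by (metis power_mult mult.commute)
      thus ?thesis by (simp only: S.e_nat)
    qed
    ultimately show ?thesis by (simp add: A_def S.IA_def image_Un)
  qed
  have Beq: "B = S.e ` S.IB"
  proof -
    have "(int \<delta> - 3) div 2 = int D - 1" "(int \<delta> - 1) div 2 = int D" using dD by auto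
    thus ?thesis by (auto simp: B_def S.IB_def powi_eq)
  qed
  have ABeq: "set_prod A B = S.e ` S.J" using Aeq Beq S.AB_eq by simp
  have dA: "dA = min_dist n S.DA" using dA_def Aeq by simp
  have part1: "is_LRC n (cyclic_code_Fq q n (set_prod A B)) (int dA - int \<delta> + 1) \<delta>"
    using S.LRC ABeq dA dD by simp
  have cd: "code_dim q (cyclic_code_Fq q n (set_prod A B)) = S.kk" using S.code_dim_C ABeq by simp
  have kk: "int S.kk = int n - int m - 2 * int \<delta> + 3" using nN mM dD MDN by (simp add: S.kk_def)
  have part3: "optimal_LRC (int n) (int (code_dim q (cyclic_code_Fq q n (set_prod A B))))
                 (int (min_dist n (cyclic_code_Fq q n (set_prod A B)))) (int dA - int \<delta> + 1) (int \<delta>)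
            \<and> min_dist n (cyclic_code_Fq q n (set_prod A B)) = m + \<delta> - 1"
    if hyp: "int \<delta> - 2 < int n - int m - int dA"
  proof -
    have h: "min_dist n S.DA < S.kk + 2 * D" using hyp dA nN mM dD MDN by (simp add: S.kk_def)
    have md: "min_dist n (cyclic_code_Fq q n (set_prod A B)) = 2 * M + 2 * D"
      using S.min_dist_C[OF h] ABeq by simp
    have dge: "N - M < dA" using S.dA_ge dA by simp
    define r :: int where "r = int dA - int \<delta> + 1"
    have r0: "r > 0" using dge MDN dD by (simp add: r_def)
    have rk: "r < int S.kk" using h dA dD by (simp add: r_def)
    have kr: "int S.kk \<le> 2 * r" using dge dD MDN by (simp add: r_def S.kk_def)
    have ceil: "\<lceil>real_of_int (int S.kk) / real_of_int r\<rceil> = 2"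
    proof (rule ceiling_unique)
      have "real_of_int r < real_of_int (int S.kk)" using rk by linarith
      thus "real_of_int 2 - 1 < real_of_int (int S.kk) / real_of_int r" using r0 by (simp add: field_simps)
      have "real_of_int (int S.kk) \<le> 2 * real_of_int r" using kr by linarith
      thus "real_of_int (int S.kk) / real_of_int r \<le> real_of_int 2" using r0 by (simp add: field_simps)
    qed
    have rr: "int dA - int \<delta> + 1 = r" by (simp add: r_def)
    have "int (2 * M + 2 * D) = int n - int S.kk - (2 - 1) * (int \<delta> - 1) + 1"
      using nN mM dD MDN M1 by (simp add: S.kk_def)
    thus ?thesis
      unfolding optimal_LRC_def cd md rr ceil using mM dD by simp

  qed
  have part2: "int (code_dim q (cyclic_code_Fq q n (set_prod A B))) = int n - int m - 2 * int \<delta> + 3"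
    using cd kk by simp
  show ?thesis using part1 part2 part3 by blast
qed

end
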